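(* For any $J\in\mathbb{N}^+$, $h\ge0$ and any lattice points $y_1\neq y_2$ in $\mathbb{Z}^d$, $\mathsf{F}^{y_1}_J\cap\mathsf{F}^{y_2}_J=\emptyset$.
   Context: $\widetilde{\mathbb{Z}}^d$ ($d\ge3$) is the metric graph of $\mathbb{Z}^d$ (each nearest-neighbor edge replaced by a compact interval of length $d$), and $\widetilde{\mathcal{L}}_{1/2}$ is the loop soup on it (Poisson point process of continuous loops with intensity $\frac12\widetilde\mu$, $\widetilde\mu$ the Brownian loop measure of Lupu). A fundamental loop is a loop whose range contains at least two lattice points. Connections $\leftrightarrow$ are via continuous paths in the union of ranges of loops of the soup (or nonempty intersection); $\nleftrightarrow$ is the negation; $\mathbf{C}(x)$ is the cluster of $x$. The ghost field: i.i.d. $\{0,1\}$-valued $\mathscr{G}^h_x$, $x\in\mathbb{Z}^d$, independent of the soup, with $\mathbb{P}(\mathscr{G}^h_x=0)=e^{-h}$; $\mathcal{G}^h=\{x:\mathscr{G}^h_x=1\}$. For $x\in\mathbb{Z}^d$, $i\in\mathbb{N}^+$, $x_i^{\pm}=x\pm(i,0,\dots,0)$, and $A_J^x=\bigcup_{i=1}^J\{x_i^+,x_i^-\}\cup\{x\}$. For $A\subset\mathbb{Z}^d$, $\gamma^{\mathrm f}_A$ is the union of ranges of fundamental loops of $\widetilde{\mathcal{L}}_{1/2}$ that visit every point of $A$ and no other lattice point. For distinct $x,y,z$, $\mathsf{E}(x,y,z)$ is the event that (1) $\mathbf{0}\leftrightarrow x$ and $\mathbf{0}\nleftrightarrow\mathcal{G}^h$;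 (2) $y\leftrightarrow\mathcal{G}^h$ and $z\leftrightarrow\mathcal{G}^h$; (3) $\mathbf{C}(x),\mathbf{C}(y),\mathbf{C}(z)$ are pairwise disjoint. $\mathsf{E}^x_J=\mathsf{E}(x,x_J^-,x_J^+)$. $\mathsf{F}^x_J$ is the event that $\gamma^{\mathrm f}_{A_J^x}\neq\emptyset$ and that, after deleting from $\widetilde{\mathcal{L}}_{1/2}$ all loops composing $\gamma^{\mathrm f}_{A_J^x}$, the event $\mathsf{E}^x_J$ occurs. *)

theory Defs
  imports "HOL-Analysis.Analysis"
begin

text \<open>Points of R^d are represented as functions nat => real vanishing at indices >= d
  (product topology, which on this subspace is the Euclidean one).  Coordinate 0 is the
  first coordinate.  The metric graph of Z^d is realised as the union of the closed unit
  segments between nearest neighbours (edge length is irrelevant for all notions used).\<close>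

type_synonym point = "nat \<Rightarrow> real"
type_synonym loop = "real \<Rightarrow> point"

definition lattice :: "nat \<Rightarrow> point set" where
  "lattice d = {v. (\<forall>i\<ge>d. v i = 0) \<and> (\<forall>i<d. v i \<in> \<int>)}"

definition metric_graph :: "nat \<Rightarrow> point set" where
  "metric_graph d = {v. (\<forall>i\<ge>d. v i = 0) \<and> card {i. i < d \<and> v i \<notin> \<int>} \<le> 1}"

definition origin :: point where
  "origin = (\<lambda>_. 0)"

definition is_loop :: "nat \<Rightarrow> loop \<Rightarrow> bool" where
  "is_loop d l \<longleftrightarrow> path l \<and> pathstart l = pathfinish l \<and> path_image l \<subseteq> metric_graph d"

definition visited :: "nat \<Rightarrow> loop \<Rightarrow> point set" where
  "visited d l = path_image l \<inter> lattice d"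

definition fundamental :: "nat \<Rightarrow> loop \<Rightarrow> bool" where
  "fundamental d l \<longleftrightarrow> (\<exists>a b. a \<noteq> b \<and> a \<in> visited d l \<and> b \<in> visited d l)"

definition ranges :: "loop set \<Rightarrow> point set" where
  "ranges L = (\<Union>l\<in>L. path_image l)"

definition floops :: "nat \<Rightarrow> loop set \<Rightarrow> point set \<Rightarrow> loop set" where
  "floops d L A = {l \<in> L. fundamental d l \<and> visited d l = A}"

definition gammaF :: "nat \<Rightarrow> loop set \<Rightarrow> point set \<Rightarrow> point set" where
  "gammaF d L A = ranges (floops d L A)"

definition conn :: "point set \<Rightarrow> point set \<Rightarrow> point set \<Rightarrow> bool" where
  "conn S A B \<longleftrightarrow> A \<inter> B \<noteq> {} \<or>
     (\<exists>g. path g \<and> path_image g \<subseteq> S \<and> pathstart g \<in> A \<and> pathfinish g \<in> B)"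

definition cluster :: "nat \<Rightarrow> point set \<Rightarrow> point \<Rightarrow> point set" where
  "cluster d S x = {v \<in> metric_graph d. conn S {v} {x}}"

text \<open>x_i^{+} = x + (i,0,...,0), x_i^{-} = x - (i,0,...,0)  (use a negative i for minus).\<close>
definition shift :: "point \<Rightarrow> int \<Rightarrow> point" where
  "shift x i = x(0 := x 0 + real_of_int i)"

definition AJ :: "point \<Rightarrow> nat \<Rightarrow> point set" where
  "AJ x J = {x} \<union> {shift x (int i) | i. 1 \<le> i \<and> i \<le> J} \<union> {shift x (- int i) | i. 1 \<le> i \<and> i \<le> J}"

definition Eev :: "nat \<Rightarrow> point set \<Rightarrow> point set \<Rightarrow> point \<Rightarrow> point \<Rightarrow> point \<Rightarrow> bool" where
  "Eev d S G x y z \<longleftrightarrow>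
     conn S {origin} {x} \<and> \<not> conn S {origin} G \<and>
     conn S {y} G \<and> conn S {z} G \<and>
     cluster d S x \<inter> cluster d S y = {} \<and>
     cluster d S x \<inter> cluster d S z = {} \<and>
     cluster d S y \<inter> cluster d S z = {}"

definition Omega :: "nat \<Rightarrow> (loop set \<times> point set) set" where
  "Omega d = {(L, G). (\<forall>l\<in>L. is_loop d l) \<and> G \<subseteq> lattice d}"

definition Fev :: "nat \<Rightarrow> nat \<Rightarrow> point \<Rightarrow> (loop set \<times> point set) set" where
  "Fev d J x = {(L, G) \<in> Omega d.
      gammaF d L (AJ x J) \<noteq> {} \<and>
      Eev d (ranges (L - floops d L (AJ x J))) G x (shift x (- int J)) (shift x (int J))}"

end

theory Submission
  imports Defs
begin

lemma conn_refl: "conn S {p} {p}"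
  by (auto simp: conn_def)

lemma conn_sym: assumes "conn S {p} {q}" shows "conn S {q} {p}"
proof -
  { assume "p \<noteq> q"
    then obtain g where "path g" "path_image g \<subseteq> S" "pathstart g = p" "pathfinish g = q"
      using assms by (auto simp: conn_def)
    then have ?thesis unfolding conn_def
      by (intro disjI2 exI[of _ "reversepath g"]) auto }
  then show ?thesis using conn_refl by blast
qed

lemma conn_trans: assumes "conn S {p} {q}" "conn S {q} {r}" shows "conn S {p} {r}"
proof -
  { assume "p \<noteq> q" "q \<noteq> r"
    then obtain g where g: "path g" "path_image g \<subseteq> S" "pathstart g = p" "pathfinish g = q"
      using assms by (auto simp: conn_def)
    obtain h where h: "path h" "path_image h \<subseteq> S" "pathstart h = q" "pathfinish h = r"
      using assms \<open>q \<noteq> r\<close> by (auto simp: conn_def)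
    have ?thesis unfolding conn_def
      by (intro disjI2 exI[of _ "g +++ h"]) (use g h in \<open>auto simp: path_image_join\<close>) }
  then show ?thesis using assms by blast
qed

lemma conn_setD: "conn S {p} G \<Longrightarrow> (\<exists>g\<in>G. conn S {p} {g})"
  by (auto simp: conn_def)

lemma conn_setI: "g \<in> G \<Longrightarrow> conn S {p} {g} \<Longrightarrow> conn S {p} G"
  by (auto simp: conn_def)

lemma img_conn:
  assumes "path g" "path_image g \<subseteq> S" "a \<in> path_image g" "b \<in> path_image g"
  shows "conn S {a} {b}"
proof -
  obtain h where "path h" "path_image h \<subseteq> path_image g" "pathstart h = a" "pathfinish h = b"
    using path_connected_path_image[OF assms(1)] assms(3,4) unfolding path_connected_def by blast
  then show ?thesis unfolding conn_def using assms(2) by blast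
qed

lemma dich:
  assumes "conn (ranges M) {p} {q}"
    and "\<And>l. l \<in> M \<Longrightarrow> l \<notin> N \<Longrightarrow> path l \<and> y \<in> path_image l"
  shows "conn (ranges N) {p} {q} \<or> (conn (ranges M) {p} {y} \<and> conn (ranges M) {q} {y})"
proof (cases "p = q")
  case True then show ?thesis using conn_refl by blast
next
  case False
  then obtain g where g: "path g" "path_image g \<subseteq> ranges M" "pathstart g = p" "pathfinish g = q"
    using assms by (auto simp: conn_def)
  show ?thesis
  proof (cases "path_image g \<subseteq> ranges N")
    case True then show ?thesis using g unfolding conn_def by blast
  next
    case False
    then obtain r where r: "r \<in> path_image g" "r \<notin> ranges N" by blast
    then obtain l where l: "l \<in> M" "r \<in> path_image l" using g(2) by (auto simp: ranges_def)
    have "l \<notin> N" using l r by (auto simp: ranges_def)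
    then have pl: "path l" "y \<in> path_image l" using assms(2) l by auto
    have sub: "path_image l \<subseteq> ranges M" using l by (auto simp: ranges_def)
    have ry: "conn (ranges M) {r} {y}" using img_conn[OF pl(1) sub l(2) pl(2)] .
    have "conn (ranges M) {p} {r}" "conn (ranges M) {q} {r}"
      using img_conn[OF g(1) g(2)] r(1) g(3,4) pathstart_in_path_image pathfinish_in_path_image
      by metis+
    then show ?thesis using ry conn_trans by blast
  qed
qed

lemma AJ_props: "z \<in> AJ y J \<Longrightarrow> (\<forall>i. i \<noteq> 0 \<longrightarrow> z i = y i) \<and> y 0 - J \<le> z 0 \<and> z 0 \<le> y 0 + J"
  by (auto simp: AJ_def shift_def)

lemma AJ_mem: "J \<ge> 1 \<Longrightarrow> y \<in> AJ y J \<and> shift y (int J) \<in> AJ y J \<and> shift y (- int J) \<in> AJ y J"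
  unfolding AJ_def by blast

lemma AJ_ne:
  assumes "y1 \<noteq> y2" "J \<ge> 1"
  shows "AJ y1 J \<noteq> AJ y2 J"
proof
  assume eq: "AJ y1 J = AJ y2 J"
  consider "y1 0 = y2 0" | "y1 0 < y2 0" | "y1 0 > y2 0" by linarith
  then show False
  proof cases
    case 1
    have "y1 \<in> AJ y2 J" using eq AJ_mem[OF assms(2)] by blast
    then have "\<forall>i. i \<noteq> 0 \<longrightarrow> y1 i = y2 i" using AJ_props by blast
    then have "y1 = y2" using 1 by (metis ext)
    then show False using assms by blast
  next
    case 2
    have "shift y1 (- int J) \<in> AJ y2 J" using eq AJ_mem[OF assms(2)] by blast
    then have "y2 0 - J \<le> shift y1 (- int J) 0" using AJ_props by blast
    then show False using 2 by (simp add: shift_def)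
  next
    case 3
    have "shift y2 (- int J) \<in> AJ y1 J" using eq AJ_mem[OF assms(2)] by blast
    then have "y1 0 - J \<le> shift y2 (- int J) 0" using AJ_props by blast
    then show False using 3 by (simp add: shift_def)
  qed
qed

lemma lattice_mg: "v \<in> lattice d \<Longrightarrow> v \<in> metric_graph d"
proof -
  assume v: "v \<in> lattice d"
  then have e: "{i. i < d \<and> v i \<notin> \<int>} = {}" by (auto simp: lattice_def)
  have c: "card {i. i < d \<and> v i \<notin> \<int>} \<le> 1" by (subst e) simp
  have "\<forall>i\<ge>d. v i = 0" using v by (simp add: lattice_def)
  with c show ?thesis unfolding metric_graph_def by blast
qed

lemma clus_nc:
  assumes "x \<in> metric_graph d" "cluster d S x \<inter> cluster d S y = {}"
  shows "\<not> conn S {x} {y}"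
  using assms conn_refl by (auto simp: cluster_def)

lemma shift_lat: "y \<in> lattice d \<Longrightarrow> 0 < d \<Longrightarrow> shift y k \<in> lattice d"
  by (auto simp: lattice_def shift_def)

lemma half:
  assumes L: "\<forall>l\<in>L. is_loop d l"
    and y1: "y1 \<in> lattice d" and d: "0 < d" and J: "J \<ge> 1" and ne: "AJ y1 J \<noteq> AJ y2 J"
    and g1: "gammaF d L (AJ y1 J) \<noteq> {}"
    and E1: "Eev d (ranges (L - floops d L (AJ y1 J))) G y1 (shift y1 (- int J)) (shift y1 (int J))"
  shows "conn (ranges (L - floops d L (AJ y2 J))) {y1} G"
proof -
  define M where "M = L - floops d L (AJ y1 J)"
  define N where "N = L - floops d L (AJ y2 J)"
  define a where "a = shift y1 (int J)"
  define b where "b = shift y1 (- int J)"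
  obtain l1 where l1: "l1 \<in> floops d L (AJ y1 J)"
    using g1 by (auto simp: gammaF_def ranges_def)
  have l1N: "l1 \<in> N" using l1 ne by (auto simp: N_def floops_def)
  have pl1: "path l1" using L l1 by (auto simp: floops_def is_loop_def)
  have A1: "AJ y1 J \<subseteq> path_image l1" using l1 by (auto simp: floops_def visited_def)
  have subN: "path_image l1 \<subseteq> ranges N" using l1N by (auto simp: ranges_def)
  have cy: "conn (ranges N) {y1} {z}" if "z \<in> AJ y1 J" for z
    using img_conn[OF pl1 subN] A1 that AJ_mem[OF J] by blast
  have hyp: "\<And>l. l \<in> M \<Longrightarrow> l \<notin> N \<Longrightarrow> path l \<and> y2 \<in> path_image l"
  proof -
    fix l assume "l \<in> M" "l \<notin> N"
    then have "l \<in> floops d L (AJ y2 J)" "l \<in> L" by (auto simp: M_def N_def)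
    then show "path l \<and> y2 \<in> path_image l" using L AJ_mem[OF J, of y2]
      by (auto simp: floops_def is_loop_def visited_def)
  qed
  have "conn (ranges M) {a} G" using E1 unfolding Eev_def M_def a_def by blast
  then obtain ga where ga: "ga \<in> G" "conn (ranges M) {a} {ga}" by (blast dest: conn_setD)
  have "conn (ranges M) {b} G" using E1 unfolding Eev_def M_def b_def by blast
  then obtain gb where gb: "gb \<in> G" "conn (ranges M) {b} {gb}" by (blast dest: conn_setD)
  have dj: "cluster d (ranges M) b \<inter> cluster d (ranges M) a = {}"
    using E1 unfolding Eev_def M_def a_def b_def by blast
  have "b \<in> lattice d" unfolding b_def by (rule shift_lat[OF y1 d])
  then have nab: "\<not> conn (ranges M) {b} {a}" using clus_nc[OF lattice_mg dj] by blast
  have D1: "conn (ranges N) {a} {ga} \<or> conn (ranges M) {a} {y2}"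
    using dich[OF ga(2) hyp] by blast
  have D2: "conn (ranges N) {b} {gb} \<or> conn (ranges M) {b} {y2}"
    using dich[OF gb(2) hyp] by blast
  have "\<not> (conn (ranges M) {a} {y2} \<and> conn (ranges M) {b} {y2})"
  proof
    assume h: "conn (ranges M) {a} {y2} \<and> conn (ranges M) {b} {y2}"
    then have "conn (ranges M) {b} {a}" using conn_trans[of _ b y2 a] conn_sym[of _ a y2] by blast
    then show False using nab by blast
  qed
  then have "conn (ranges N) {a} {ga} \<or> conn (ranges N) {b} {gb}" using D1 D2 by blast
  then show ?thesis
  proof
    assume "conn (ranges N) {a} {ga}"
    then have "conn (ranges N) {y1} {ga}" using cy AJ_mem[OF J] conn_trans unfolding a_def by blast
    then show ?thesis using conn_setI[OF ga(1)] unfolding N_def by blast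
  next
    assume "conn (ranges N) {b} {gb}"
    then have "conn (ranges N) {y1} {gb}" using cy AJ_mem[OF J] conn_trans unfolding b_def by blast
    then show ?thesis using conn_setI[OF gb(1)] unfolding N_def by blast
  qed
qed

theorem lemma9p3:
  fixes d J :: nat and y1 y2 :: point
  assumes "d \<ge> 3" and "J \<ge> 1"
    and "y1 \<in> lattice d" and "y2 \<in> lattice d" and "y1 \<noteq> y2"
  shows "Fev d J y1 \<inter> Fev d J y2 = {}"
proof (rule ccontr)
  assume "Fev d J y1 \<inter> Fev d J y2 \<noteq> {}"
  then obtain L G where F1: "(L, G) \<in> Fev d J y1" and F2: "(L, G) \<in> Fev d J y2" by auto
  have d0: "0 < d" using assms(1) by simp
  have ne: "AJ y1 J \<noteq> AJ y2 J" using AJ_ne assms by blast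
  have Lp: "\<forall>l\<in>L. is_loop d l" using F1 by (auto simp: Fev_def Omega_def)
  define M where "M = L - floops d L (AJ y1 J)"
  define N where "N = L - floops d L (AJ y2 J)"
  have E1: "Eev d (ranges M) G y1 (shift y1 (- int J)) (shift y1 (int J))"
    and g1: "gammaF d L (AJ y1 J) \<noteq> {}" using F1 by (auto simp: Fev_def M_def)
  have E2: "Eev d (ranges N) G y2 (shift y2 (- int J)) (shift y2 (int J))"
    and g2: "gammaF d L (AJ y2 J) \<noteq> {}" using F2 by (auto simp: Fev_def N_def)
  have c2: "conn (ranges N) {y1} G"
    using half[OF Lp assms(3) d0 assms(2) ne g1] E1 unfolding M_def N_def by blast
  have c1: "conn (ranges M) {y2} G"
    using half[OF Lp assms(4) d0 assms(2) ne[symmetric] g2] E2 unfolding M_def N_def by blast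
  have hyp: "\<And>l. l \<in> M \<Longrightarrow> l \<notin> N \<Longrightarrow> path l \<and> y2 \<in> path_image l"
  proof -
    fix l assume "l \<in> M" "l \<notin> N"
    then have "l \<in> floops d L (AJ y2 J)" "l \<in> L" by (auto simp: M_def N_def)
    then show "path l \<and> y2 \<in> path_image l" using Lp AJ_mem[OF assms(2), of y2]
      by (auto simp: floops_def is_loop_def visited_def)
  qed
  have "conn (ranges M) {origin} {y1}" using E1 by (simp add: Eev_def)
  from dich[OF this hyp]
  have "conn (ranges N) {origin} {y1} \<or> conn (ranges M) {origin} {y2}" by blast
  moreover have "\<not> conn (ranges N) {origin} G" using E2 unfolding Eev_def by blast
  moreover have "\<not> conn (ranges M) {origin} G" using E1 unfolding Eev_def by blast
  moreover obtain g1 where g1: "g1 \<in> G" "conn (ranges M) {y2} {g1}" using c1 by (blast dest: conn_setD)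
  moreover obtain g2 where g2: "g2 \<in> G" "conn (ranges N) {y1} {g2}" using c2 by (blast dest: conn_setD)
  ultimately show False
    using conn_trans[of "ranges N" origin y1 g2] conn_trans[of "ranges M" origin y2 g1]
      conn_setI[OF g1(1), of "ranges M" origin] conn_setI[OF g2(1), of "ranges N" origin]
    by blast
qed

end
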